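(* Let $X$ be a super $X$-set parameter, let $G$ and $G'$ be graphs of the same order $n$, and let $\varphi:\mathfrak{X}(G)\to\mathfrak{X}(G')$ be a graph isomorphism. Then $|\varphi(S)|=|S|$ for every $X$-set $S$ of $G$ if and only if there exists a bijection $\psi:V(G)\to V(G')$ such that $\psi(S)=\varphi(S)$ for every $X$-set $S$ of $G$ (where $\psi(S)=\{\psi(s):s\in S\}$). In particular, if $|\varphi(S)|=|S|$ for every $X$-set $S$ of $G$, then the vertices of $G'$ can be relabeled so that $G$ and the relabeled graph have exactly the same $X$-sets.
   Context: All graphs are finite, simple, undirected, with nonempty vertex set. A super $X$-set parameter $X$ assigns to each graph $G$ a family of subsets of $V(G)$, called the $X$-sets of $G$, such that: every graph isomorphism maps $X$-sets to $X$-sets; every graph has at least one $X$-set; and (Superset) if $S$ is an $X$-set of $G$ and $S\subseteq S'\subseteq V(G)$, then $S'$ is an $X$-set of $G$. The $X$-TAR graph $\mathfrak{X}(G)$ has as vertices the $X$-sets of $G$, with $S_1S_2$ an edge iff $|S_1\ominus S_2|=1$. *)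

theory Defs
  imports Main
begin

type_synonym 'v graph = "'v set \<times> 'v set set"

definition verts :: "'v graph \<Rightarrow> 'v set" where
  "verts G = fst G"

definition edges :: "'v graph \<Rightarrow> 'v set set" where
  "edges G = snd G"

definition is_graph :: "'v graph \<Rightarrow> bool" where
  "is_graph G \<longleftrightarrow> finite (verts G) \<and> verts G \<noteq> {} \<and>
     (\<forall>e\<in>edges G. e \<subseteq> verts G \<and> card e = 2)"

definition graph_iso :: "('v \<Rightarrow> 'w) \<Rightarrow> 'v graph \<Rightarrow> 'w graph \<Rightarrow> bool" where
  "graph_iso f G H \<longleftrightarrow> bij_betw f (verts G) (verts H) \<and>
     (\<forall>u\<in>verts G. \<forall>v\<in>verts G. {u, v} \<in> edges G \<longleftrightarrow> {f u, f v} \<in> edges H)"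

definition super_param :: "('v graph \<Rightarrow> 'v set set) \<Rightarrow> bool" where
  "super_param X \<longleftrightarrow>
     (\<forall>G. is_graph G \<longrightarrow> X G \<subseteq> Pow (verts G)) \<and>
     (\<forall>G H f. is_graph G \<longrightarrow> is_graph H \<longrightarrow> graph_iso f G H \<longrightarrow>
         (\<forall>S\<in>X G. f ` S \<in> X H)) \<and>
     (\<forall>G. is_graph G \<longrightarrow> X G \<noteq> {}) \<and>
     (\<forall>G S S'. is_graph G \<longrightarrow> S \<in> X G \<longrightarrow> S \<subseteq> S' \<longrightarrow> S' \<subseteq> verts G \<longrightarrow> S' \<in> X G)"

definition tar :: "('v graph \<Rightarrow> 'v set set) \<Rightarrow> 'v graph \<Rightarrow> 'v set graph" where
  "tar X G = (X G, {{S1, S2} | S1 S2. S1 \<in> X G \<and> S2 \<in> X G \<and>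
                                       card ((S1 - S2) \<union> (S2 - S1)) = 1})"

definition relabel :: "('v \<Rightarrow> 'w) \<Rightarrow> 'v graph \<Rightarrow> 'w graph" where
  "relabel f G = (f ` verts G, (\<lambda>e. f ` e) ` edges G)"

end

theory Submission
  imports Defs
begin

lemma sp_pow: "super_param X \<Longrightarrow> is_graph G \<Longrightarrow> X G \<subseteq> Pow (verts G)"
  by (drule super_param_def[THEN iffD1, THEN conjunct1]) (erule allE, erule mp)
lemma sp_iso: "super_param X \<Longrightarrow> is_graph G \<Longrightarrow> is_graph H \<Longrightarrow> graph_iso f G H \<Longrightarrow> S \<in> X G \<Longrightarrow> f ` S \<in> X H"
  apply (drule super_param_def[THEN iffD1, THEN conjunct2, THEN conjunct1])
  apply (drule spec[of _ G], drule spec[of _ H], drule spec[of _ f])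
  by blast
lemma sp_ne: "super_param X \<Longrightarrow> is_graph G \<Longrightarrow> X G \<noteq> {}"
  apply (drule super_param_def[THEN iffD1, THEN conjunct2, THEN conjunct2, THEN conjunct1])
  by (erule allE, erule mp)
lemma sp_sup: "super_param X \<Longrightarrow> is_graph G \<Longrightarrow> S \<in> X G \<Longrightarrow> S \<subseteq> S' \<Longrightarrow> S' \<subseteq> verts G \<Longrightarrow> S' \<in> X G"
  apply (drule super_param_def[THEN iffD1, THEN conjunct2, THEN conjunct2, THEN conjunct2])
  apply (drule spec[of _ G], drule spec[of _ S], drule spec[of _ S'])
  by blast

lemma tar_edge_D:
  assumes "{A,B} \<in> edges (tar X H)"
  shows "card ((A-B) \<union> (B-A)) = 1"
proof -
  obtain S1 S2 where e: "{A,B} = {S1,S2}" and c: "card ((S1 - S2) \<union> (S2 - S1)) = 1"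
    using assms unfolding tar_def edges_def by auto
  from e have "(A = S1 \<and> B = S2) \<or> (A = S2 \<and> B = S1)" by (auto simp: doubleton_eq_iff)
  then show ?thesis using c by (auto simp: Un_commute)
qed

lemma tar_edge_I:
  assumes "A \<in> X H" "B \<in> X H" "card ((A-B) \<union> (B-A)) = 1"
  shows "{A,B} \<in> edges (tar X H)"
  using assms unfolding tar_def edges_def by auto

lemma symdiff_sub:
  assumes "finite A" "finite B" "card ((A-B) \<union> (B-A)) = 1" "card B = card A + 1"
  shows "A \<subseteq> B"
proof -
  have d: "card ((A-B) \<union> (B-A)) = card (A-B) + card (B-A)"
    using assms(1,2) by (intro card_Un_disjoint) auto
  have "card A = card (A \<inter> B) + card (A - B)"
    using assms(1) by (metis Int_Diff_disjoint Int_Diff_Un card_Un_disjoint finite_Diff finite_Int)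
  moreover have "card B = card (A \<inter> B) + card (B - A)"
    using assms(2) by (metis Int_Diff_disjoint Int_Diff_Un card_Un_disjoint finite_Diff finite_Int Int_commute)
  ultimately have "card (A - B) = 0" using assms(3,4) d by linarith
  then show ?thesis using assms(1) by auto
qed

lemma mono_phi:
  assumes sp: "super_param X" and gG: "is_graph G"
    and iso: "graph_iso \<phi> (tar X G) (tar X G')"
    and cardp: "\<forall>S\<in>X G. card (\<phi> S) = card S"
    and fin': "\<forall>S\<in>X G'. finite S"
    and S: "S \<in> X G"
  shows "finite (T - S) \<Longrightarrow> S \<subseteq> T \<Longrightarrow> T \<subseteq> verts G \<Longrightarrow> \<phi> S \<subseteq> \<phi> T"
proof (induction "card (T - S)" arbitrary: T)
  case 0
  then have "T = S" by auto
  then show ?case by simp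
next
  case (Suc m)
  then obtain x where x: "x \<in> T - S" by (metis card.empty ex_in_conv nat.distinct(1))
  define T1 where "T1 = T - {x}"
  have c1: "m = card (T1 - S)" using Suc.hyps(2) x Suc.prems(1) unfolding T1_def
    by (metis Diff_insert2 card_Diff_singleton diff_Suc_1 insert_Diff_single insert_absorb Diff_insert)
  have h1: "\<phi> S \<subseteq> \<phi> T1"
  proof (rule Suc.hyps(1)[OF c1])
    show "finite (T1 - S)" using Suc.prems(1) unfolding T1_def by (rule finite_subset[rotated]) auto
    show "S \<subseteq> T1" "T1 \<subseteq> verts G" using Suc.prems x unfolding T1_def by auto
  qed
  have finV: "finite (verts G)" using gG unfolding is_graph_def by blast
  have clos: "\<And>S'. S \<subseteq> S' \<Longrightarrow> S' \<subseteq> verts G \<Longrightarrow> S' \<in> X G"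
    using sp_sup[OF sp gG S] by blast
  have T1X: "T1 \<in> X G" using Suc.prems x unfolding T1_def by (intro clos) auto
  have TX: "T \<in> X G" using clos Suc.prems by auto
  have sd: "(T1 - T) \<union> (T - T1) = {x}" using x unfolding T1_def by auto
  have "{T1, T} \<in> edges (tar X G)" using tar_edge_I[of T1 X G T, OF T1X TX] sd by simp
  moreover have "T1 \<in> verts (tar X G)" "T \<in> verts (tar X G)" using T1X TX
    by (auto simp: tar_def verts_def)
  ultimately have "{\<phi> T1, \<phi> T} \<in> edges (tar X G')" using iso unfolding graph_iso_def by blast
  then have e: "card ((\<phi> T1 - \<phi> T) \<union> (\<phi> T - \<phi> T1)) = 1" by (rule tar_edge_D)
  have bij: "bij_betw \<phi> (X G) (X G')" using iso unfolding graph_iso_def by (simp add: tar_def verts_def)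
  have f1: "finite (\<phi> T1)" "finite (\<phi> T)" using fin' bij T1X TX bij_betwE by blast+
  have finT: "finite T" using Suc.prems(3) finV finite_subset by blast
  have "card T = card T1 + 1" unfolding T1_def using finT x
    by (metis DiffD1 Suc_eq_plus1 card_Suc_Diff1)
  then have "card (\<phi> T) = card (\<phi> T1) + 1" using cardp T1X TX by simp
  then have "\<phi> T1 \<subseteq> \<phi> T" using symdiff_sub[OF f1 e] by simp
  then show ?case using h1 by blast
qed

lemma relabel_iso:
  assumes g: "is_graph G" and inj: "inj_on f (verts G)"
  shows "is_graph (relabel f G) \<and> graph_iso f G (relabel f G)"
proof
  have ev: "\<forall>e\<in>edges G. e \<subseteq> verts G \<and> card e = 2" using g unfolding is_graph_def by blast
  show "is_graph (relabel f G)"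
    unfolding is_graph_def
  proof (intro conjI ballI)
    show "finite (verts (relabel f G))" "verts (relabel f G) \<noteq> {}"
      using g unfolding is_graph_def relabel_def verts_def by simp_all
  next
    fix e assume "e \<in> edges (relabel f G)"
    then obtain e0 where e0: "e0 \<in> edges G" "e = f ` e0" by (auto simp: relabel_def edges_def)
    have sub: "e0 \<subseteq> verts G" and c2: "card e0 = 2" using ev e0(1) by auto
    have "inj_on f e0" using inj sub by (rule inj_on_subset)
    then have "card e = 2" using c2 e0(2) card_image by metis
    moreover have "e \<subseteq> verts (relabel f G)" using sub e0(2) by (auto simp: relabel_def verts_def)
    ultimately show "e \<subseteq> verts (relabel f G)" "card e = 2" by blast+
  qed
  show "graph_iso f G (relabel f G)"
    unfolding graph_iso_def
  proof (intro conjI ballI)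
    show "bij_betw f (verts G) (verts (relabel f G))"
      using inj by (simp add: bij_betw_def relabel_def verts_def)
  next
    fix u v assume uv: "u \<in> verts G" "v \<in> verts G"
    show "({u, v} \<in> edges G) = ({f u, f v} \<in> edges (relabel f G))"
    proof
      assume a: "{u, v} \<in> edges G"
      have "f ` {u,v} \<in> (\<lambda>e. f ` e) ` edges G" using a by (rule imageI)
      then show "{f u, f v} \<in> edges (relabel f G)" by (simp add: relabel_def edges_def)
    next
      assume "{f u, f v} \<in> edges (relabel f G)"
      then obtain e0 where e0: "e0 \<in> edges G" "{f u, f v} = f ` e0" by (auto simp: relabel_def edges_def)
      have "f ` {u, v} = f ` e0" using e0 by simp
      moreover have "{u,v} \<subseteq> verts G" using uv by blast
      moreover have "e0 \<subseteq> verts G" using ev e0(1) by blast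
      ultimately have "{u,v} = e0" using inj_on_image_eq_iff[OF inj] by blast
      then show "{u, v} \<in> edges G" using e0 by simp
    qed
  qed
qed

theorem theorem2p25:
  fixes X :: "'v graph \<Rightarrow> 'v set set"
    and G G' :: "'v graph"
    and \<phi> :: "'v set \<Rightarrow> 'v set"
  assumes "super_param X"
    and "is_graph G" and "is_graph G'"
    and "card (verts G) = card (verts G')"
    and "graph_iso \<phi> (tar X G) (tar X G')"
  shows "((\<forall>S\<in>X G. card (\<phi> S) = card S) \<longleftrightarrow>
           (\<exists>\<psi>. bij_betw \<psi> (verts G) (verts G') \<and> (\<forall>S\<in>X G. \<psi> ` S = \<phi> S)))
         \<and> ((\<forall>S\<in>X G. card (\<phi> S) = card S) \<longrightarrow>
           (\<exists>\<psi>. bij_betw \<psi> (verts G) (verts G') \<and>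
                 verts (relabel (inv_into (verts G) \<psi>) G') = verts G \<and>
                 X (relabel (inv_into (verts G) \<psi>) G') = X G))"
proof -
  note sp = assms(1) and gG = assms(2) and gG' = assms(3) and iso = assms(5)
  define V where "V = verts G"
  define V' where "V' = verts G'"
  have finV: "finite V" and finV': "finite V'" using gG gG' unfolding is_graph_def V_def V'_def by blast+
  have cV: "card V = card V'" using assms(4) by (simp add: V_def V'_def)
  have pow: "X G \<subseteq> Pow V" using sp_pow[OF sp gG] by (simp add: V_def)
  have pow': "X G' \<subseteq> Pow V'" using sp_pow[OF sp gG'] by (simp add: V'_def)
  have bij: "bij_betw \<phi> (X G) (X G')" using iso unfolding graph_iso_def by (simp add: tar_def verts_def)
  have fin': "\<forall>S\<in>X G'. finite S" using pow' finV' finite_subset by blast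
  have clos: "\<And>S S'. S \<in> X G \<Longrightarrow> S \<subseteq> S' \<Longrightarrow> S' \<subseteq> V \<Longrightarrow> S' \<in> X G"
    using sp_sup[OF sp gG] unfolding V_def by blast
  have ne: "X G \<noteq> {}" using sp_ne[OF sp gG] .
  have VX: "V \<in> X G" using ne pow clos by blast
  have easy: "card (\<phi> S) = card S" if "bij_betw \<psi> V V'" "\<forall>S\<in>X G. \<psi> ` S = \<phi> S" "S \<in> X G" for \<psi> S
  proof -
    have "S \<subseteq> V" using that(3) pow by blast
    then have "inj_on \<psi> S" using bij_betw_imp_inj_on[OF that(1)] inj_on_subset by blast
    then have "card (\<psi> ` S) = card S" by (rule card_image)
    then show ?thesis using that(2,3) by simp
  qed
  have hard: "\<exists>\<psi>. bij_betw \<psi> V V' \<and> (\<forall>S\<in>X G. \<psi> ` S = \<phi> S)"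
    if cardp: "\<forall>S\<in>X G. card (\<phi> S) = card S"
  proof -
    have mono: "\<phi> S \<subseteq> \<phi> T" if "S \<in> X G" "S \<subseteq> T" "T \<subseteq> V" for S T
    proof -
      have "T - S \<subseteq> V" using that(3) by blast
      then have "finite (T - S)" using finite_subset finV by blast
      then show ?thesis using mono_phi[OF sp gG iso cardp fin' that(1)] that(2,3) unfolding V_def by blast
    qed
    have "\<phi> V \<subseteq> V'" using pow' bij VX bij_betwE by blast
    then have phiV: "\<phi> V = V'" using card_subset_eq[OF finV'] cardp VX cV by simp
    define D where "D = {v \<in> V. V - {v} \<in> X G}"
    define D' where "D' = {w \<in> V'. V' - {w} \<in> X G'}"
    define h where "h v = (SOME w. w \<in> V' - \<phi> (V - {v}))" for v
    have hprop: "h v \<in> V' \<and> \<phi> (V - {v}) = V' - {h v}" if "v \<in> D" for v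
    proof -
      have m: "V - {v} \<in> X G" "v \<in> V" using that D_def by auto
      have sub: "\<phi> (V - {v}) \<subseteq> V'" using pow' bij m bij_betwE by blast
      have "card (\<phi> (V - {v})) = card V' - 1" using cardp m cV finV by simp
      moreover have "card V > 0" using m(2) finV card_gt_0_iff by blast
      moreover note cV
      moreover have "card (V' - \<phi> (V - {v})) = card V' - card (\<phi> (V - {v}))"
        using card_Diff_subset[OF finite_subset[OF sub finV'] sub] .
      ultimately have "card (V' - \<phi> (V - {v})) = 1" by simp
      then obtain w where w: "V' - \<phi> (V - {v}) = {w}" using card_1_singletonE by blast
      then have "h v = w" unfolding h_def by simp
      then show ?thesis using w sub by auto
    qed
    have hbij: "bij_betw h D D'"
    proof -
      have "inj_on h D"
      proof
        fix u v assume uv: "u \<in> D" "v \<in> D" "h u = h v"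
        then have "\<phi> (V - {u}) = \<phi> (V - {v})" using hprop[OF uv(1)] hprop[OF uv(2)] by simp
        moreover have "V - {u} \<in> X G" "V - {v} \<in> X G" using uv D_def by auto
        ultimately have "V - {u} = V - {v}" using bij_betw_imp_inj_on[OF bij] by (simp add: inj_on_eq_iff)
        then show "u = v" using uv D_def by blast
      qed
      moreover have "h ` D \<subseteq> D'"
      proof
        fix w assume "w \<in> h ` D"
        then obtain v where v: "v \<in> D" "w = h v" by blast
        have "V - {v} \<in> X G" using v D_def by auto
        then have "\<phi> (V - {v}) \<in> X G'" using bij bij_betwE by blast
        then show "w \<in> D'" using hprop[OF v(1)] v D'_def by auto
      qed
      moreover have "D' \<subseteq> h ` D"
      proof
        fix w assume w: "w \<in> D'"
        then have "V' - {w} \<in> \<phi> ` X G" using bij D'_def bij_betw_imp_surj_on by blast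
        then obtain S where S: "S \<in> X G" "\<phi> S = V' - {w}" by blast
        have "card (V' - {w}) = card V' - 1" using w D'_def finV' by simp
        moreover have "card S = card (\<phi> S)" using cardp S(1) by simp
        ultimately have "card S = card V - 1" using S(2) cV by simp
        moreover have SV: "S \<subseteq> V" using S pow by blast
        moreover have "card V' > 0" using w D'_def finV' card_gt_0_iff by blast
        moreover note cV
        moreover have "card (V - S) = card V - card S" using card_Diff_subset[OF finite_subset[OF SV finV] SV] .
        ultimately have "card (V - S) = 1" by simp
        then obtain v where v: "V - S = {v}" using card_1_singletonE by blast
        have vV: "v \<in> V" using v by blast
        have SVv: "S = V - {v}" using v SV by blast
        then have vD: "v \<in> D" using S vV D_def by auto
        have "V' - {h v} = V' - {w}" using hprop[OF vD] S SVv by simp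
        then have "h v = w" using hprop[OF vD] w D'_def by blast
        then show "w \<in> h ` D" using vD by blast
      qed
      ultimately show ?thesis unfolding bij_betw_def by blast
    qed
    have DV: "D \<subseteq> V" and DV': "D' \<subseteq> V'" using D_def D'_def by auto
    have "card D = card D'" using hbij bij_betw_same_card by blast
    moreover have "card (V - D) = card V - card D" using card_Diff_subset[OF finite_subset[OF DV finV] DV] .
    moreover have "card (V' - D') = card V' - card D'" using card_Diff_subset[OF finite_subset[OF DV' finV'] DV'] .
    ultimately have "card (V - D) = card (V' - D')" using cV by simp
    then obtain k where k: "bij_betw k (V - D) (V' - D')"
      using finite_same_card_bij[OF finite_Diff[OF finV] finite_Diff[OF finV']] by blast
    define \<psi> where "\<psi> x = (if x \<in> D then h x else k x)" for x
    have b1: "bij_betw \<psi> D D'" using hbij by (rule bij_betw_cong[THEN iffD1, rotated]) (simp add: \<psi>_def)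
    have b2: "bij_betw \<psi> (V - D) (V' - D')" using k by (rule bij_betw_cong[THEN iffD1, rotated]) (simp add: \<psi>_def)
    have "bij_betw \<psi> (D \<union> (V - D)) (D' \<union> (V' - D'))" by (rule bij_betw_combine[OF b1 b2]) blast
    moreover have "D \<union> (V - D) = V" "D' \<union> (V' - D') = V'" using DV DV' by blast+
    ultimately have psib: "bij_betw \<psi> V V'" by simp
    have "\<psi> ` S = \<phi> S" if S: "S \<in> X G" for S
    proof -
      have SV: "S \<subseteq> V" using S pow by blast
      have "\<psi> v \<notin> \<phi> S" if v: "v \<in> V - S" for v
      proof -
        have s1: "S \<subseteq> V - {v}" using v SV by blast
        have s2: "V - {v} \<subseteq> V" by blast
        have "V - {v} \<in> X G" using clos[OF S s1 s2] .
        then have vD: "v \<in> D" using v unfolding D_def by blast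
        have "\<phi> S \<subseteq> \<phi> (V - {v})" using mono[OF S s1 s2] .
        moreover have "\<psi> v = h v" using vD unfolding \<psi>_def by simp
        ultimately show ?thesis using hprop[OF vD] by blast
      qed
      moreover have "\<phi> S \<subseteq> V'" using pow' bij S bij_betwE by blast
      moreover have "\<psi> ` V = V'" using psib bij_betw_imp_surj_on by blast
      ultimately have sub: "\<phi> S \<subseteq> \<psi> ` S" by blast
      have "inj_on \<psi> S" using bij_betw_imp_inj_on[OF psib] SV inj_on_subset by blast
      then have "card (\<psi> ` S) = card S" by (rule card_image)
      moreover have "finite (\<psi> ` S)" using finite_imageI[OF finite_subset[OF SV finV]] .
      ultimately show ?thesis using card_subset_eq[OF _ sub] cardp S by simp
    qed
    then show ?thesis using psib by blast
  qed
  have part1: "(\<forall>S\<in>X G. card (\<phi> S) = card S) \<longleftrightarrow>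
           (\<exists>\<psi>. bij_betw \<psi> (verts G) (verts G') \<and> (\<forall>S\<in>X G. \<psi> ` S = \<phi> S))"
  proof
    assume c: "\<forall>S\<in>X G. card (\<phi> S) = card S"
    show "\<exists>\<psi>. bij_betw \<psi> (verts G) (verts G') \<and> (\<forall>S\<in>X G. \<psi> ` S = \<phi> S)"
      using hard[OF c] unfolding V_def V'_def .
  next
    assume "\<exists>\<psi>. bij_betw \<psi> (verts G) (verts G') \<and> (\<forall>S\<in>X G. \<psi> ` S = \<phi> S)"
    then obtain \<psi> where a: "bij_betw \<psi> V V'" "\<forall>S\<in>X G. \<psi> ` S = \<phi> S"
      unfolding V_def V'_def by blast
    show "\<forall>S\<in>X G. card (\<phi> S) = card S" using easy[OF a] by blast
  qed
  have part2: "\<exists>\<psi>. bij_betw \<psi> (verts G) (verts G') \<and>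
                 verts (relabel (inv_into (verts G) \<psi>) G') = verts G \<and>
                 X (relabel (inv_into (verts G) \<psi>) G') = X G"
    if cardp: "\<forall>S\<in>X G. card (\<phi> S) = card S"
  proof -
    obtain \<psi> where psib: "bij_betw \<psi> V V'" and psi: "\<forall>S\<in>X G. \<psi> ` S = \<phi> S"
      using hard[OF cardp] by blast
    define g where "g = inv_into V \<psi>"
    have gb: "bij_betw g V' V" using psib bij_betw_inv_into g_def by blast
    define H where "H = relabel g G'"
    have injg: "inj_on g (verts G')" using bij_betw_imp_inj_on[OF gb] V'_def by simp
    have H1: "is_graph H \<and> graph_iso g G' H" using relabel_iso[OF gG' injg] H_def by simp
    have vH: "verts H = V" using bij_betw_imp_surj_on[OF gb] by (simp add: H_def relabel_def verts_def V'_def)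
    have injpsi: "inj_on \<psi> (verts H)" using bij_betw_imp_inj_on[OF psib] vH by simp
    have H2: "is_graph (relabel \<psi> H) \<and> graph_iso \<psi> H (relabel \<psi> H)"
      using relabel_iso[OF _ injpsi] H1 by blast
    have psig: "\<psi> (g y) = y" if "y \<in> V'" for y using that psib g_def
      by (meson bij_betw_inv_into_right)
    have gpsi: "g (\<psi> x) = x" if "x \<in> V" for x using that psib g_def
      by (meson bij_betw_inv_into_left)
    have img: "\<psi> ` g ` A = A" if "A \<subseteq> V'" for A
    proof -
      have "\<psi> ` g ` A = (\<psi> \<circ> g) ` A" by (simp add: image_comp)
      also have "... = (\<lambda>y. y) ` A" using that psig by (intro image_cong) auto
      also have "... = A" by simp
      finally show ?thesis .
    qed
    have ev': "\<forall>e\<in>edges G'. e \<subseteq> V'" using gG' unfolding is_graph_def V'_def by blast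
    have "relabel \<psi> H = G'"
    proof -
      have "\<psi> ` verts H = V'" using vH psib bij_betw_imp_surj_on by blast
      moreover have "(\<lambda>e. \<psi> ` e) ` edges H = edges G'"
      proof -
        have "(\<lambda>e. \<psi> ` e) ` edges H = (\<lambda>e. \<psi> ` g ` e) ` edges G'"
          by (simp add: H_def relabel_def edges_def image_comp)
        also have "... = (\<lambda>e. e) ` edges G'" using img ev' by (intro image_cong) auto
        also have "... = edges G'" by simp
        finally show ?thesis .
      qed
      ultimately show ?thesis by (simp add: relabel_def V'_def verts_def edges_def)
    qed
    then have isoH: "graph_iso \<psi> H G'" using H2 by simp
    have spi: "\<And>A B f. is_graph A \<Longrightarrow> is_graph B \<Longrightarrow> graph_iso f A B \<Longrightarrow> (\<forall>S\<in>X A. f ` S \<in> X B)"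
      using sp_iso[OF sp] by blast
    have spp: "\<And>A. is_graph A \<Longrightarrow> X A \<subseteq> Pow (verts A)"
      using sp_pow[OF sp] by blast
    have inv1: "\<forall>S\<in>X G'. g ` S \<in> X H" using spi[OF gG'] H1 by blast
    have inv2: "\<forall>T\<in>X H. \<psi> ` T \<in> X G'" using spi[OF _ gG' isoH] H1 by blast
    have powH: "X H \<subseteq> Pow V" using spp[of H] H1 vH by simp
    have "X H = X G"
    proof
      show "X G \<subseteq> X H"
      proof
        fix S assume S: "S \<in> X G"
        have "\<phi> S \<in> X G'" using bij S bij_betwE by blast
        then have "g ` \<psi> ` S \<in> X H" using inv1 psi S by simp
        moreover have "g ` \<psi> ` S = S"
        proof -
          have SV: "S \<subseteq> V" using S pow by blast
          have "g ` \<psi> ` S = (g \<circ> \<psi>) ` S" by (simp add: image_comp)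
          also have "... = (\<lambda>y. y) ` S" using SV gpsi by (intro image_cong) auto
          finally show ?thesis by simp
        qed
        ultimately show "S \<in> X H" by simp
      qed
    next
      show "X H \<subseteq> X G"
      proof
        fix T assume T: "T \<in> X H"
        then have "\<psi> ` T \<in> \<phi> ` X G" using inv2 bij bij_betw_imp_surj_on by blast
        then obtain S where S: "S \<in> X G" "\<psi> ` T = \<phi> S" by blast
        then have "\<psi> ` T = \<psi> ` S" using psi by simp
        moreover have "T \<subseteq> V" "S \<subseteq> V" using T powH S pow by auto
        moreover have "inj_on \<psi> V" using bij_betw_imp_inj_on[OF psib] .
        ultimately have "T = S" using inj_on_image_eq_iff by metis
        then show "T \<in> X G" using S by simp
      qed
    qed
    then have "X (relabel (inv_into (verts G) \<psi>) G') = X G" unfolding H_def g_def V_def .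
    moreover have "verts (relabel (inv_into (verts G) \<psi>) G') = verts G" using vH unfolding H_def g_def V_def .
    moreover have "bij_betw \<psi> (verts G) (verts G')" using psib unfolding V_def V'_def .
    ultimately show ?thesis by blast
  qed
  show ?thesis using part1 part2 by blast
qed

end
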